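(* Fix $\lambda_1,\lambda_2,\lambda_3\in\mathbb{Z}_{\ge0}$ and a $0$-initial triple $(a,b,c)\in\mathbb{R}_+^3$. Let $\mathbf{w}=[w_1,w_2,\dots]$ be an infinite reduced sequence; for $n\ge1$ let $(a_n,b_n,c_n)=\mu_{w_n}\circ\cdots\circ\mu_{w_1}(1,1,1)$ (generalized Markov chain) and $(x_n,y_n,z_n)=\mathcal{M}_{w_n}\circ\cdots\circ\mathcal{M}_{w_1}(a,b,c)$ (classical Euclid chain). (1) If each of $1,2,3$ appears infinitely many times in $\mathbf{w}$, there exists a real number $q$ with $\lim_{n\to\infty}\frac{\log a_n}{x_n}=\lim_{n\to\infty}\frac{\log b_n}{y_n}=\lim_{n\to\infty}\frac{\log c_n}{z_n}=q$. (2) If some index $i\in\{1,2,3\}$ appears only finitely many times in $\mathbf{w}$, there exists a real number $q$ such that for both $j\in\{1,2,3\}\setminus\{i\}$, the logarithm of the $j$-th component of $(a_n,b_n,c_n)$ divided by the $j$-th component of $(x_n,y_n,z_n)$ converges to $q$ as $n\to\infty$.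
   Context: Generalized Markov mutations: $\mu_1(x_1,x_2,x_3)=(\frac{x_2^2+\lambda_1x_2x_3+x_3^2}{x_1},x_2,x_3)$, $\mu_2(x_1,x_2,x_3)=(x_1,\frac{x_1^2+\lambda_2x_1x_3+x_3^2}{x_2},x_3)$, $\mu_3(x_1,x_2,x_3)=(x_1,x_2,\frac{x_1^2+\lambda_3x_1x_2+x_2^2}{x_3})$ (these generate all positive integer solutions of $X_1^2+X_2^2+X_3^2+\lambda_3X_1X_2+\lambda_1X_2X_3+\lambda_2X_3X_1=(3+\lambda_1+\lambda_2+\lambda_3)X_1X_2X_3$ from $(1,1,1)$). Classical Euclid mutations on $\mathbb{R}_+^3$: $\mathcal{M}_1(x,y,z)=(y+z,y,z)$, $\mathcal{M}_2(x,y,z)=(x,x+z,z)$, $\mathcal{M}_3(x,y,z)=(x,y,x+y)$. A $0$-initial triple is $(a,b,c)\in\mathbb{R}_+^3$ with $a\ne b+c$, $b\ne a+c$, $c\ne a+b$. A sequence with entries in $\{1,2,3\}$ is reduced if consecutive entries differ. $\log$ is the natural logarithm. *)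

theory Defs
  imports "HOL-Analysis.Analysis"
begin

type_synonym triple = "real \<times> real \<times> real"

definition comp3 :: "nat \<Rightarrow> triple \<Rightarrow> real" where
  "comp3 j t = (case t of (x1, x2, x3) \<Rightarrow> if j = 1 then x1 else if j = 2 then x2 else x3)"

definition gmut :: "nat \<Rightarrow> nat \<Rightarrow> nat \<Rightarrow> nat \<Rightarrow> triple \<Rightarrow> triple" where
  "gmut l1 l2 l3 k t = (case t of (x1, x2, x3) \<Rightarrow>
     if k = 1 then ((x2^2 + real l1 * x2 * x3 + x3^2) / x1, x2, x3)
     else if k = 2 then (x1, (x1^2 + real l2 * x1 * x3 + x3^2) / x2, x3)
     else (x1, x2, (x1^2 + real l3 * x1 * x2 + x2^2) / x3))"

definition emut :: "nat \<Rightarrow> triple \<Rightarrow> triple" where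
  "emut k t = (case t of (x, y, z) \<Rightarrow>
     if k = 1 then (y + z, y, z)
     else if k = 2 then (x, x + z, z)
     else (x, y, x + y))"

text \<open>Chain: step 0 is the initial triple; step n (n >= 1) is f_{w n} o ... o f_{w 1} applied to it.
  The sequence w is indexed from 1; w 0 is ignored.\<close>
fun chain :: "(nat \<Rightarrow> triple \<Rightarrow> triple) \<Rightarrow> (nat \<Rightarrow> nat) \<Rightarrow> triple \<Rightarrow> nat \<Rightarrow> triple" where
  "chain f w t0 0 = t0"
| "chain f w t0 (Suc n) = f (w (Suc n)) (chain f w t0 n)"

definition reduced_inf_seq :: "(nat \<Rightarrow> nat) \<Rightarrow> bool" where
  "reduced_inf_seq w \<longleftrightarrow> (\<forall>n\<ge>1. w n \<in> {1,2,3} \<and> w (Suc n) \<noteq> w n)"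

definition zero_initial :: "triple \<Rightarrow> bool" where
  "zero_initial t = (case t of (a, b, c) \<Rightarrow>
     a > 0 \<and> b > 0 \<and> c > 0 \<and> a \<noteq> b + c \<and> b \<noteq> a + c \<and> c \<noteq> a + b)"

end

theory Submission
  imports Defs
begin


lemma comp3_simps[simp]: "comp3 1 (x,y,z) = x" "comp3 (Suc 0) (x,y,z) = x" "comp3 2 (x,y,z) = y" "comp3 3 (x,y,z) = z"
  by (simp_all add: comp3_def)

definition o1 :: "nat \<Rightarrow> nat" where "o1 k = (if k = 1 then 2 else 1)"
definition o2 :: "nat \<Rightarrow> nat" where "o2 k = (if k = 3 then 2 else 3)"

lemma o_facts:
  assumes "k \<in> {1,2,3}"
  shows "o1 k \<in> {1,2,3}" "o2 k \<in> {1,2,3}" "o1 k \<noteq> k" "o2 k \<noteq> k" "o1 k \<noteq> o2 k"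
  using assms by (auto simp: o1_def o2_def)

lemma o_cover: "k \<in> {1,2,3} \<Longrightarrow> j \<in> {1,2,3} \<Longrightarrow> j = k \<or> j = o1 k \<or> j = o2 k"
  by (auto simp: o1_def o2_def)

lemma o_third: "k \<in> {1,2,3} \<Longrightarrow> j \<in> {1,2,3} \<Longrightarrow> i \<in> {1,2,3} \<Longrightarrow> j \<noteq> k \<Longrightarrow> i \<noteq> k \<Longrightarrow> i \<noteq> j
   \<Longrightarrow> (o1 k = j \<and> o2 k = i) \<or> (o1 k = i \<and> o2 k = j)"
  by (auto simp: o1_def o2_def)

definition Lc :: "nat \<Rightarrow> nat \<Rightarrow> nat \<Rightarrow> nat \<Rightarrow> real" where
  "Lc l1 l2 l3 k = real (if k = 1 then l1 else if k = 2 then l2 else l3)"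

lemma emut_comp:
  assumes "k \<in> {1,2,3}" "j \<in> {1,2,3}"
  shows "comp3 j (emut k t) = (if j = k then comp3 (o1 k) t + comp3 (o2 k) t else comp3 j t)"
  using assms by (cases t) (auto simp: emut_def comp3_def o1_def o2_def)

lemma gmut_comp:
  assumes "k \<in> {1,2,3}" "j \<in> {1,2,3}"
  shows "comp3 j (gmut l1 l2 l3 k t) = (if j = k then
     ((comp3 (o1 k) t)^2 + Lc l1 l2 l3 k * comp3 (o1 k) t * comp3 (o2 k) t + (comp3 (o2 k) t)^2) / comp3 k t
     else comp3 j t)"
  using assms by (cases t) (auto simp: gmut_def comp3_def o1_def o2_def Lc_def)



lemma markov_step:
  fixes x y z al be ga :: real
  assumes x1: "x \<ge> 1" and y1: "y \<ge> 1" and z1: "z \<ge> 1" and al: "al \<ge> 0" and be: "be \<ge> 0" and ga: "ga \<ge> 0"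
    and eq: "x^2+y^2+z^2+al*y*z+be*x*y+ga*x*z = (3+al+be+ga)*x*y*z"
    and xle: "x \<le> y \<or> x \<le> z"
  defines "x' \<equiv> (y^2+al*y*z+z^2)/x"
  shows "x'^2+y^2+z^2+al*y*z+be*x'*y+ga*x'*z = (3+al+be+ga)*x'*y*z"
    and "x' \<ge> y + z" and "x' \<ge> y*z" and "x' \<le> (3+al+be+ga)*y*z"
proof -
  have xp: "x' = (3+al+be+ga)*y*z - be*y - ga*z - x"
  proof -
    have "y^2+al*y*z+z^2 = x*((3+al+be+ga)*y*z - be*y - ga*z - x)"
      using eq by (simp add: algebra_simps power2_eq_square)
    then show ?thesis using x1 unfolding x'_def by (simp add: field_simps)
  qed
  have num: "x * x' = y^2+al*y*z+z^2" using x1 unfolding x'_def by simp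
  show "x'^2+y^2+z^2+al*y*z+be*x'*y+ga*x'*z = (3+al+be+ga)*x'*y*z"
  proof -
    have "x'^2+y^2+z^2+al*y*z+be*x'*y+ga*x'*z - (3+al+be+ga)*x'*y*z
        = x' * (x' - ((3+al+be+ga)*y*z - be*y - ga*z)) + x * x'"
      using num by (simp add: algebra_simps power2_eq_square)
    also have "\<dots> = x' * (-x) + x * x'"
    proof -
      have h: "x' - ((3+al+be+ga)*y*z - be*y - ga*z) = - x" using xp by simp
      show ?thesis by (simp only: h)
    qed
    also have "\<dots> = 0" by simp
    finally show ?thesis by simp
  qed
  have yz_y: "y*z \<ge> y" using y1 z1 by (simp add: mult_le_cancel_left1)
  have yz_z: "y*z \<ge> z" using y1 z1 by (simp add: mult_le_cancel_right1)
  have yzx: "y*z \<ge> x" using xle yz_y yz_z by linarith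
  have b1: "be*(y*z) \<ge> be*y" using be yz_y by (simp add: mult_left_mono)
  have g1: "ga*(y*z) \<ge> ga*z" using ga yz_z by (simp add: mult_left_mono)
  have a1: "al*(y*z) \<ge> 0" using al y1 z1 by simp
  have xp2: "x' = al*(y*z) + be*(y*z) + ga*(y*z) + 3*(y*z) - be*y - ga*z - x" using xp by (simp add: algebra_simps)
  show "x' \<ge> y + z" using xp2 b1 g1 a1 yz_y yz_z yzx y1 z1 by linarith
  show "x' \<ge> y * z" using xp2 b1 g1 a1 yz_y yz_z yzx y1 z1 by linarith
  have "be*y \<ge> 0" "ga*z \<ge> 0" using be ga y1 z1 by simp_all
  then show "x' \<le> (3+al+be+ga)*y*z" using xp x1 by linarith
qed



fun ech :: "(nat \<Rightarrow> nat) \<Rightarrow> nat \<Rightarrow> (nat \<Rightarrow> real) \<Rightarrow> nat \<Rightarrow> nat \<Rightarrow> real" where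
  "ech w n0 u 0 = u"
| "ech w n0 u (Suc k) = (\<lambda>j. if j = w (n0 + Suc k)
      then ech w n0 u k (o1 (w (n0 + Suc k))) + ech w n0 u k (o2 (w (n0 + Suc k)))
      else ech w n0 u k j)"

definition E :: "(nat \<Rightarrow> nat) \<Rightarrow> triple \<Rightarrow> nat \<Rightarrow> nat \<Rightarrow> real" where
  "E w t n j = comp3 j (chain emut w t n)"

lemma E_Suc:
  assumes W: "\<forall>n\<ge>1. w n \<in> {1,2,3}" and j: "j \<in> {1,2,3}"
  shows "E w t (Suc n) j = (if j = w (Suc n) then E w t n (o1 (w (Suc n))) + E w t n (o2 (w (Suc n))) else E w t n j)"
  using W j emut_comp[of "w (Suc n)" j] by (simp add: E_def)

lemma ech_E:
  assumes W: "\<forall>n\<ge>1. w n \<in> {1,2,3}" and j: "j \<in> {1,2,3}"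
  shows "E w t (n0 + k) j = ech w n0 (E w t n0) k j"
  using j
proof (induction k arbitrary: j)
  case 0 then show ?case by simp
next
  case (Suc k)
  have m: "w (n0 + Suc k) \<in> {1,2,3}" using W by simp
  show ?case
    using E_Suc[OF W Suc.prems, of t "n0 + k"] Suc.IH Suc.prems o_facts[OF m] by auto
qed

lemma ech_lin:
  assumes W: "\<forall>n\<ge>1. w n \<in> {1,2,3}"
    and le: "\<forall>j\<in>{1,2,3}. s j \<le> al * u j + be * v j"
  shows "j \<in> {1,2,3} \<Longrightarrow> ech w n0 s k j \<le> al * ech w n0 u k j + be * ech w n0 v k j"
proof (induction k arbitrary: j)
  case 0
  have "s j \<le> al * u j + be * v j" using le 0 by blast
  then show ?case by simp
next
  case (Suc k)
  have m: "w (n0 + Suc k) \<in> {1,2,3}" using W by simp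
  show ?case
  proof (cases "j = w (n0 + Suc k)")
    case True
    have "ech w n0 s k (o1 (w (n0 + Suc k))) \<le> al * ech w n0 u k (o1 (w (n0 + Suc k))) + be * ech w n0 v k (o1 (w (n0 + Suc k)))"
      using Suc.IH o_facts[OF m] by blast
    moreover have "ech w n0 s k (o2 (w (n0 + Suc k))) \<le> al * ech w n0 u k (o2 (w (n0 + Suc k))) + be * ech w n0 v k (o2 (w (n0 + Suc k)))"
      using Suc.IH o_facts[OF m] by blast
    ultimately show ?thesis using True by (simp add: algebra_simps)
  next
    case False
    then show ?thesis using Suc by simp
  qed
qed

lemma ech_pos:
  assumes W: "\<forall>n\<ge>1. w n \<in> {1,2,3}"
    and pos: "\<forall>j\<in>{1,2,3}. u j > 0"
  shows "j \<in> {1,2,3} \<Longrightarrow> ech w n0 u k j > 0"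
proof (induction k arbitrary: j)
  case 0
  have "u j > 0" using pos 0 by blast
  then show ?case by simp
next
  case (Suc k)
  have m: "w (n0 + Suc k) \<in> {1,2,3}" using W by simp
  show ?case using Suc o_facts[OF m] by (auto intro: add_pos_pos)
qed

lemma ech_super:
  assumes W: "\<forall>n\<ge>1. w n \<in> {1,2,3}"
    and st: "\<And>k. X (Suc k) (w (n0 + Suc k)) \<ge> X k (o1 (w (n0 + Suc k))) + X k (o2 (w (n0 + Suc k)))"
    and un: "\<And>k j. j \<in> {1,2,3} \<Longrightarrow> j \<noteq> w (n0 + Suc k) \<Longrightarrow> X (Suc k) j = X k j"
  shows "j \<in> {1,2,3} \<Longrightarrow> X k j \<ge> ech w n0 (X 0) k j"
proof (induction k arbitrary: j)
  case 0 then show ?case by simp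
next
  case (Suc k)
  have m: "w (n0 + Suc k) \<in> {1,2,3}" using W by simp
  show ?case
  proof (cases "j = w (n0 + Suc k)")
    case True
    have "X k (o1 (w (n0 + Suc k))) \<ge> ech w n0 (X 0) k (o1 (w (n0 + Suc k)))"
      "X k (o2 (w (n0 + Suc k))) \<ge> ech w n0 (X 0) k (o2 (w (n0 + Suc k)))"
      using Suc.IH o_facts[OF m] by blast+
    then show ?thesis using True st[of k] by simp
  next
    case False
    then show ?thesis using Suc un[of j k] by simp
  qed
qed

lemma ech_sub:
  assumes W: "\<forall>n\<ge>1. w n \<in> {1,2,3}"
    and st: "\<And>k. X (Suc k) (w (n0 + Suc k)) \<le> X k (o1 (w (n0 + Suc k))) + X k (o2 (w (n0 + Suc k))) + ka"
    and un: "\<And>k j. j \<in> {1,2,3} \<Longrightarrow> j \<noteq> w (n0 + Suc k) \<Longrightarrow> X (Suc k) j = X k j"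
  shows "j \<in> {1,2,3} \<Longrightarrow> X k j + ka \<le> ech w n0 (X 0) k j + ka * ech w n0 (\<lambda>_. 1) k j"
proof (induction k arbitrary: j)
  case 0 then show ?case by simp
next
  case (Suc k)
  have m: "w (n0 + Suc k) \<in> {1,2,3}" using W by simp
  show ?case
  proof (cases "j = w (n0 + Suc k)")
    case True
    have "X k (o1 (w (n0 + Suc k))) + ka \<le> ech w n0 (X 0) k (o1 (w (n0 + Suc k))) + ka * ech w n0 (\<lambda>_. 1) k (o1 (w (n0 + Suc k)))"
      "X k (o2 (w (n0 + Suc k))) + ka \<le> ech w n0 (X 0) k (o2 (w (n0 + Suc k))) + ka * ech w n0 (\<lambda>_. 1) k (o2 (w (n0 + Suc k)))"
      using Suc.IH o_facts[OF m] by blast+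
    then show ?thesis using True st[of k] by (simp add: algebra_simps)
  next
    case False
    then show ?thesis using Suc un[of j k] by simp
  qed
qed

lemma ech_mediant:
  assumes W: "\<forall>n\<ge>1. w n \<in> {1,2,3}"
    and pos: "\<forall>j\<in>{1,2,3}. V j > 0"
    and bnd: "\<forall>j\<in>{1,2,3}. lo \<le> U j / V j \<and> U j / V j \<le> hi"
  shows "j \<in> {1,2,3} \<Longrightarrow> lo \<le> ech w n0 U k j / ech w n0 V k j \<and> ech w n0 U k j / ech w n0 V k j \<le> hi"
proof (induction k arbitrary: j)
  case 0
  have "lo \<le> U j / V j \<and> U j / V j \<le> hi" using bnd 0 by blast
  then show ?case by simp
next
  case (Suc k)
  have m: "w (n0 + Suc k) \<in> {1,2,3}" using W by simp
  show ?case
  proof (cases "j = w (n0 + Suc k)")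
    case True
    define p where "p = o1 (w (n0 + Suc k))"
    define q where "q = o2 (w (n0 + Suc k))"
    have pq: "p \<in> {1,2,3}" "q \<in> {1,2,3}" using o_facts[OF m] p_def q_def by auto
    have Vp: "ech w n0 V k p > 0" and Vq: "ech w n0 V k q > 0" using ech_pos[OF W pos] pq by auto
    have "lo \<le> ech w n0 U k p / ech w n0 V k p" "ech w n0 U k p / ech w n0 V k p \<le> hi"
         "lo \<le> ech w n0 U k q / ech w n0 V k q" "ech w n0 U k q / ech w n0 V k q \<le> hi"
      using Suc.IH pq by blast+
    then have "lo * ech w n0 V k p \<le> ech w n0 U k p" "ech w n0 U k p \<le> hi * ech w n0 V k p"
         "lo * ech w n0 V k q \<le> ech w n0 U k q" "ech w n0 U k q \<le> hi * ech w n0 V k q"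
      using Vp Vq by (simp_all add: divide_simps)
    then have "lo * (ech w n0 V k p + ech w n0 V k q) \<le> ech w n0 U k p + ech w n0 U k q"
        "ech w n0 U k p + ech w n0 U k q \<le> hi * (ech w n0 V k p + ech w n0 V k q)"
      by (simp_all add: algebra_simps)
    then show ?thesis using True Vp Vq unfolding p_def q_def by (simp add: divide_simps)
  next
    case False
    then show ?thesis using Suc by simp
  qed
qed

definition dd :: "(nat \<Rightarrow> real) \<Rightarrow> (nat \<Rightarrow> real) \<Rightarrow> real" where
  "dd U V = max \<bar>U 1 * V 2 - U 2 * V 1\<bar> (max \<bar>U 1 * V 3 - U 3 * V 1\<bar> \<bar>U 2 * V 3 - U 3 * V 2\<bar>)"

lemma dd_ge: "j \<in> {1,2,3} \<Longrightarrow> i \<in> {1,2,3} \<Longrightarrow> \<bar>U j * V i - U i * V j\<bar> \<le> dd U V"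
  by (auto simp: dd_def abs_minus_commute)

lemma dd_step:
  assumes m: "m \<in> {1,2,3}"
  shows "dd (\<lambda>j. if j = m then A (o1 m) + A (o2 m) else A j) (\<lambda>j. if j = m then B (o1 m) + B (o2 m) else B j) \<le> dd A B"
proof -
  have d12: "\<bar>A 1 * B 2 - A 2 * B 1\<bar> \<le> dd A B" and d13: "\<bar>A 1 * B 3 - A 3 * B 1\<bar> \<le> dd A B"
    and d23: "\<bar>A 2 * B 3 - A 3 * B 2\<bar> \<le> dd A B" by (auto simp: dd_def)
  have e1: "\<bar>x * (y + z) - (u + v) * t\<bar> = \<bar>x * z - v * t\<bar>" if "x * y = u * t" for x y z u v t :: real
    using that by (simp add: algebra_simps)
  consider "m = 1" | "m = 2" | "m = 3" using m by auto
  then show ?thesis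
  proof cases
    case 1
    have "\<bar>(A 2 + A 3) * B 2 - A 2 * (B 2 + B 3)\<bar> = \<bar>A 2 * B 3 - A 3 * B 2\<bar>"
      "\<bar>(A 2 + A 3) * B 3 - A 3 * (B 2 + B 3)\<bar> = \<bar>A 2 * B 3 - A 3 * B 2\<bar>"
      by (simp_all add: algebra_simps abs_minus_commute)
    then show ?thesis using 1 d23 by (simp add: dd_def o1_def o2_def)
  next
    case 2
    have "\<bar>A 1 * (B 1 + B 3) - (A 1 + A 3) * B 1\<bar> = \<bar>A 1 * B 3 - A 3 * B 1\<bar>"
      "\<bar>(A 1 + A 3) * B 3 - A 3 * (B 1 + B 3)\<bar> = \<bar>A 1 * B 3 - A 3 * B 1\<bar>"
      by (simp_all add: algebra_simps abs_minus_commute)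
    then show ?thesis using 2 d13 by (simp add: dd_def o1_def o2_def)
  next
    case 3
    have "\<bar>A 1 * (B 1 + B 2) - (A 1 + A 2) * B 1\<bar> = \<bar>A 1 * B 2 - A 2 * B 1\<bar>"
      "\<bar>A 2 * (B 1 + B 2) - (A 1 + A 2) * B 2\<bar> = \<bar>A 1 * B 2 - A 2 * B 1\<bar>"
      by (simp_all add: algebra_simps abs_minus_commute)
    then show ?thesis using 3 d12 by (simp add: dd_def o1_def o2_def)
  qed
qed

lemma ech_dd:
  assumes W: "\<forall>n\<ge>1. w n \<in> {1,2,3}"
  shows "dd (ech w n0 U k) (ech w n0 V k) \<le> dd U V"
proof (induction k)
  case 0 then show ?case by simp
next
  case (Suc k)
  have m: "w (n0 + Suc k) \<in> {1,2,3}" using W by simp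
  define A where "A = ech w n0 U k"
  define B where "B = ech w n0 V k"
  have "dd (ech w n0 U (Suc k)) (ech w n0 V (Suc k)) \<le> dd A B"
    using dd_step[OF m, of A B] unfolding A_def B_def by simp
  then show ?case using Suc A_def B_def by simp
qed



lemma ratio_diff:
  assumes "V j > 0" "V i > 0" "j \<in> {1,2,3}" "i \<in> {1,2,3}"
  shows "\<bar>U j / V j - U i / V i\<bar> \<le> dd U V / (V j * V i)"
proof -
  have "U j / V j - U i / V i = (U j * V i - U i * V j) / (V j * V i)"
    using assms by (simp add: field_simps)
  then have "\<bar>U j / V j - U i / V i\<bar> = \<bar>U j * V i - U i * V j\<bar> / (V j * V i)"
    using assms by (simp add: abs_divide abs_mult)
  also have "\<dots> \<le> dd U V / (V j * V i)"
    using dd_ge[OF assms(3,4)] assms by (simp add: divide_right_mono)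
  finally show ?thesis .
qed

definition mn :: "(nat \<Rightarrow> real) \<Rightarrow> real" where
  "mn u = min (u 1) (min (u 2) (u 3))"

lemma mn_le: "j \<in> {1,2,3} \<Longrightarrow> mn u \<le> u j"
  by (auto simp: mn_def)

lemma mn_ge: "(\<And>j. j \<in> {1,2,3} \<Longrightarrow> c \<le> u j) \<Longrightarrow> c \<le> mn u"
  by (auto simp: mn_def)

lemma growth:
  fixes X :: "nat \<Rightarrow> nat \<Rightarrow> real"
  assumes W: "\<forall>n\<ge>1. w n \<in> {1,2,3}"
    and pos: "\<forall>j\<in>{1,2,3}. X 0 j > 0"
    and st: "\<And>n. X (Suc n) (w (Suc n)) \<ge> X n (o1 (w (Suc n))) + X n (o2 (w (Suc n)))"
    and un: "\<And>n j. j \<in> {1,2,3} \<Longrightarrow> j \<noteq> w (Suc n) \<Longrightarrow> X (Suc n) j = X n j"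
    and inf: "\<forall>i\<in>{1,2,3}. \<forall>m. \<exists>n>m. w n = i"
  shows "\<exists>N. \<forall>n\<ge>N. mn (X n) \<ge> B"
proof -
  have mpos0: "mn (X 0) > 0" using pos by (auto simp: mn_def)
  have step: "mn (X (Suc n)) \<ge> mn (X n)" if "mn (X n) > 0" for n
  proof (rule mn_ge)
    fix j :: nat assume j: "j \<in> {1,2,3}"
    have m: "w (Suc n) \<in> {1,2,3}" using W by simp
    show "mn (X n) \<le> X (Suc n) j"
    proof (cases "j = w (Suc n)")
      case True
      have "mn (X n) \<le> X n (o1 (w (Suc n)))" "mn (X n) \<le> X n (o2 (w (Suc n)))"
        using mn_le o_facts[OF m] by auto
      then have "mn (X n) \<le> X (Suc n) (w (Suc n))" using st[of n] that by linarith
      then show ?thesis using True by simp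
    next
      case False then show ?thesis using un[OF j False] mn_le[OF j] by simp
    qed
  qed
  have mpos: "mn (X n) > 0" for n
  proof (induction n)
    case 0 then show ?case using mpos0 .
  next
    case (Suc n) then show ?case using step[of n] by linarith
  qed
  have mono: "mn (X (t + d)) \<ge> mn (X t)" for t d
  proof (induction d)
    case 0 then show ?case by simp
  next
    case (Suc d) then show ?case using step[of "t + d"] mpos[of "t+d"] by simp
  qed
  have hit: "\<forall>j\<in>{1,2,3}. (\<exists>s. t < s \<and> s \<le> t + d \<and> w s = j) \<longrightarrow> X (t + d) j \<ge> 2 * mn (X t)" for t d
  proof (induction d)
    case 0 then show ?case by auto
  next
    case (Suc d)
    have m: "w (Suc (t + d)) \<in> {1,2,3}" using W by simp
    show ?case
    proof (intro ballI impI)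
      fix j :: nat assume j: "j \<in> {1,2,3}" and ex: "\<exists>s. t < s \<and> s \<le> t + Suc d \<and> w s = j"
      show "X (t + Suc d) j \<ge> 2 * mn (X t)"
      proof (cases "j = w (Suc (t + d))")
        case True
        have "mn (X (t + d)) \<le> X (t + d) (o1 (w (Suc (t + d))))" "mn (X (t + d)) \<le> X (t + d) (o2 (w (Suc (t + d))))"
          using mn_le o_facts[OF m] by auto
        then show ?thesis using st[of "t + d"] True mono[of t d] by simp
      next
        case False
        then obtain s where "t < s" "s \<le> t + d" "w s = j" using ex
          by (metis add_Suc_right le_Suc_eq)
        then have "X (t + d) j \<ge> 2 * mn (X t)" using Suc.IH j by blast
        then show ?thesis using un[OF j False] by simp
      qed
    qed
  qed
  have dbl: "\<exists>n. mn (X n) \<ge> 2 * mn (X t)" for t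
  proof -
    obtain s1 where s1: "s1 > t" "w s1 = 1" using inf by blast
    obtain s2 where s2: "s2 > t" "w s2 = 2" using inf by blast
    obtain s3 where s3: "s3 > t" "w s3 = 3" using inf by blast
    define d where "d = max s1 (max s2 s3) - t"
    have "\<forall>j\<in>{1,2,3}. X (t + d) j \<ge> 2 * mn (X t)"
    proof
      fix j :: nat assume j: "j \<in> {1,2,3}"
      have "j = 1 \<or> j = 2 \<or> j = 3" using j by auto
      then have "\<exists>s. t < s \<and> s \<le> t + d \<and> w s = j"
      proof (elim disjE)
        assume "j = 1" then show ?thesis using s1 s2 s3 unfolding d_def by (intro exI[of _ s1]) auto
      next
        assume "j = 2" then show ?thesis using s1 s2 s3 unfolding d_def by (intro exI[of _ s2]) auto
      next
        assume "j = 3" then show ?thesis using s1 s2 s3 unfolding d_def by (intro exI[of _ s3]) auto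
      qed
      then show "X (t + d) j \<ge> 2 * mn (X t)" using hit[of t d] j by blast
    qed
    then have "mn (X (t + d)) \<ge> 2 * mn (X t)" by (intro mn_ge) auto
    then show ?thesis by blast
  qed
  have pw: "\<exists>n. mn (X n) \<ge> 2 ^ i * mn (X 0)" for i
  proof (induction i)
    case 0 then show ?case by auto
  next
    case (Suc i)
    then obtain n where n: "mn (X n) \<ge> 2 ^ i * mn (X 0)" by blast
    obtain n' where "mn (X n') \<ge> 2 * mn (X n)" using dbl by blast
    then have "mn (X n') \<ge> 2 ^ Suc i * mn (X 0)" using n by simp
    then show ?case by blast
  qed
  obtain i where i: "B / mn (X 0) < 2 ^ i"
    using real_arch_pow[of 2 "B / mn (X 0)"] by auto
  then have "B < 2 ^ i * mn (X 0)" using mpos0 by (simp add: field_simps)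
  moreover obtain n where "mn (X n) \<ge> 2 ^ i * mn (X 0)" using pw[of i] by blast
  ultimately have n: "mn (X n) \<ge> B" by linarith
  have "\<forall>n'\<ge>n. mn (X n') \<ge> B"
  proof (intro allI impI)
    fix n' assume "n' \<ge> n"
    then obtain d where "n' = n + d" using le_Suc_ex by blast
    then show "mn (X n') \<ge> B" using mono[of n d] n by simp
  qed
  then show ?thesis by blast
qed



definition Mk :: "nat \<Rightarrow> nat \<Rightarrow> nat \<Rightarrow> (nat \<Rightarrow> nat) \<Rightarrow> nat \<Rightarrow> nat \<Rightarrow> real" where
  "Mk l1 l2 l3 w n j = comp3 j (chain (gmut l1 l2 l3) w (1,1,1) n)"

definition meq :: "nat \<Rightarrow> nat \<Rightarrow> nat \<Rightarrow> (nat \<Rightarrow> real) \<Rightarrow> bool" where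
  "meq l1 l2 l3 u \<longleftrightarrow> (u 1)^2+(u 2)^2+(u 3)^2 + real l3 * u 1 * u 2 + real l1 * u 2 * u 3 + real l2 * u 3 * u 1
      = (3 + real l1 + real l2 + real l3) * u 1 * u 2 * u 3"

lemma Ksum: "m \<in> {1,2,3} \<Longrightarrow> Lc l1 l2 l3 m + Lc l1 l2 l3 (o2 m) + Lc l1 l2 l3 (o1 m) = real l1 + real l2 + real l3"
  by (auto simp: Lc_def o1_def o2_def)

lemma meq_rot:
  assumes m: "m \<in> {1,2,3}"
  shows "meq l1 l2 l3 u \<longleftrightarrow>
    (u m)^2 + (u (o1 m))^2 + (u (o2 m))^2 + Lc l1 l2 l3 m * u (o1 m) * u (o2 m)
      + Lc l1 l2 l3 (o2 m) * u m * u (o1 m) + Lc l1 l2 l3 (o1 m) * u m * u (o2 m)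
    = (3 + Lc l1 l2 l3 m + Lc l1 l2 l3 (o2 m) + Lc l1 l2 l3 (o1 m)) * u m * u (o1 m) * u (o2 m)"
proof -
  consider "m = 1" | "m = 2" | "m = 3" using m by auto
  then show ?thesis
    by cases (simp_all add: meq_def Lc_def o1_def o2_def algebra_simps)
qed

lemma Mk_Suc:
  assumes m: "w (Suc n) \<in> {1,2,3}" and j: "j \<in> {1,2,3}"
  shows "Mk l1 l2 l3 w (Suc n) j = (if j = w (Suc n) then
     ((Mk l1 l2 l3 w n (o1 (w (Suc n))))^2 + Lc l1 l2 l3 (w (Suc n)) * Mk l1 l2 l3 w n (o1 (w (Suc n))) * Mk l1 l2 l3 w n (o2 (w (Suc n)))
       + (Mk l1 l2 l3 w n (o2 (w (Suc n))))^2) / Mk l1 l2 l3 w n (w (Suc n))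
     else Mk l1 l2 l3 w n j)"
  using gmut_comp[OF m j] by (simp add: Mk_def)

definition Minv :: "nat \<Rightarrow> nat \<Rightarrow> nat \<Rightarrow> (nat \<Rightarrow> nat) \<Rightarrow> nat \<Rightarrow> bool" where
  "Minv l1 l2 l3 w n \<longleftrightarrow> (\<forall>j\<in>{1,2,3}. Mk l1 l2 l3 w n j \<ge> 1) \<and> meq l1 l2 l3 (Mk l1 l2 l3 w n)
     \<and> (n \<ge> 1 \<longrightarrow> (\<forall>j\<in>{1,2,3}. Mk l1 l2 l3 w n j \<le> Mk l1 l2 l3 w n (w n)))"

lemma Mstep:
  assumes rw: "reduced_inf_seq w" and inv: "Minv l1 l2 l3 w n"
  defines "m \<equiv> w (Suc n)"
  defines "y \<equiv> Mk l1 l2 l3 w n (o1 m)" and "z \<equiv> Mk l1 l2 l3 w n (o2 m)"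
  shows "Minv l1 l2 l3 w (Suc n)"
    and "Mk l1 l2 l3 w (Suc n) m \<ge> y + z"
    and "Mk l1 l2 l3 w (Suc n) m \<ge> y * z"
    and "Mk l1 l2 l3 w (Suc n) m \<le> (3 + real l1 + real l2 + real l3) * y * z"
    and "\<And>j. j \<in> {1,2,3} \<Longrightarrow> j \<noteq> m \<Longrightarrow> Mk l1 l2 l3 w (Suc n) j = Mk l1 l2 l3 w n j"
proof -
  have W: "\<forall>n\<ge>1. w n \<in> {1,2,3}" and R: "\<forall>n\<ge>1. w (Suc n) \<noteq> w n"
    using rw by (auto simp: reduced_inf_seq_def)
  have m: "m \<in> {1,2,3}" using W m_def by simp
  note of = o_facts[OF m]
  define u where "u = Mk l1 l2 l3 w n"
  define x where "x = u m"
  have ge1: "\<forall>j\<in>{1,2,3}. u j \<ge> 1" and eq: "meq l1 l2 l3 u"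
    and mx: "n \<ge> 1 \<Longrightarrow> \<forall>j\<in>{1,2,3}. u j \<le> u (w n)"
    using inv by (auto simp: Minv_def u_def)
  have x1: "x \<ge> 1" and y1: "y \<ge> 1" and z1: "z \<ge> 1"
    using ge1 m of unfolding x_def y_def z_def u_def by auto
  have xle: "x \<le> y \<or> x \<le> z"
  proof (cases "n = 0")
    case True
    then have "u = (\<lambda>j. comp3 j (1,1,1))" by (simp add: u_def Mk_def fun_eq_iff)
    then have "u j = 1" if "j \<in> {1,2,3}" for j using that by auto
    then show ?thesis using m of unfolding x_def y_def z_def u_def by auto
  next
    case False
    then have n1: "n \<ge> 1" by simp
    have wn: "w n \<in> {1,2,3}" "w n \<noteq> m" using W R n1 m_def by auto
    have "w n = o1 m \<or> w n = o2 m" using o_cover[OF m wn(1)] wn(2) by auto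
    moreover have "x \<le> u (w n)" using mx[OF n1] m x_def by blast
    ultimately show ?thesis unfolding y_def z_def u_def[symmetric] by auto
  qed
  define al where "al = Lc l1 l2 l3 m"
  define be where "be = Lc l1 l2 l3 (o2 m)"
  define ga where "ga = Lc l1 l2 l3 (o1 m)"
  have K: "3 + al + be + ga = 3 + real l1 + real l2 + real l3"
    using Ksum[OF m, of l1 l2 l3] unfolding al_def be_def ga_def by linarith
  have eq': "x^2+y^2+z^2+al*y*z+be*x*y+ga*x*z = (3+al+be+ga)*x*y*z"
    using eq meq_rot[OF m, of l1 l2 l3 u] unfolding x_def y_def z_def u_def al_def be_def ga_def
    by (simp add: u_def)
  have abg: "al \<ge> 0" "be \<ge> 0" "ga \<ge> 0" by (simp_all add: al_def be_def ga_def Lc_def)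
  note ms = markov_step[OF x1 y1 z1 abg eq' xle]
  have new: "Mk l1 l2 l3 w (Suc n) m = (y^2+al*y*z+z^2)/x"
    using Mk_Suc[of w n m l1 l2 l3] m unfolding m_def al_def x_def y_def z_def u_def
    by (simp add: m_def power2_eq_square)
  show oth: "\<And>j. j \<in> {1,2,3} \<Longrightarrow> j \<noteq> m \<Longrightarrow> Mk l1 l2 l3 w (Suc n) j = Mk l1 l2 l3 w n j"
    using Mk_Suc[of w n _ l1 l2 l3] m unfolding m_def by simp
  show g1: "Mk l1 l2 l3 w (Suc n) m \<ge> y + z" using ms(2) new by simp
  show "Mk l1 l2 l3 w (Suc n) m \<ge> y * z" using ms(3) new by simp
  show "Mk l1 l2 l3 w (Suc n) m \<le> (3 + real l1 + real l2 + real l3) * y * z" using ms(4) new K by simp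
  define u' where "u' = Mk l1 l2 l3 w (Suc n)"
  have u'o: "u' (o1 m) = y" "u' (o2 m) = z" using oth of unfolding u'_def y_def z_def by auto
  have "meq l1 l2 l3 u'"
    using meq_rot[OF m, of l1 l2 l3 u'] ms(1) new u'o unfolding u'_def al_def be_def ga_def
    by simp
  moreover have "\<forall>j\<in>{1,2,3}. u' j \<ge> 1"
  proof
    fix j :: nat assume j: "j \<in> {1,2,3}"
    show "u' j \<ge> 1"
    proof (cases "j = m")
      case True then show ?thesis using g1 y1 z1 unfolding u'_def by simp
    next
      case False
      have "u j \<ge> 1" using ge1 j by blast
      then show ?thesis using oth[OF j False] unfolding u'_def u_def by simp
    qed
  qed
  moreover have "\<forall>j\<in>{1,2,3}. u' j \<le> u' (w (Suc n))"
  proof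
    fix j :: nat assume j: "j \<in> {1,2,3}"
    show "u' j \<le> u' (w (Suc n))"
    proof (cases "j = m")
      case True then show ?thesis unfolding m_def by simp
    next
      case False
      have "j = o1 m \<or> j = o2 m" using o_cover[OF m j] False by auto
      then show ?thesis using g1 y1 z1 u'o unfolding u'_def m_def by auto
    qed
  qed
  ultimately show "Minv l1 l2 l3 w (Suc n)" unfolding Minv_def u'_def by simp
qed

lemma Minv0: "Minv l1 l2 l3 w 0"
  by (simp add: Minv_def Mk_def meq_def)

lemma Minv_all: "reduced_inf_seq w \<Longrightarrow> Minv l1 l2 l3 w n"
  by (induction n) (auto simp: Minv0 Mstep(1))



lemma ech_shift: "ech w n0 U (k1 + k) = ech w (n0 + k1) (ech w n0 U k1) k"
proof (induction k)
  case 0 then show ?case by simp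
next
  case (Suc k)
  have e: "n0 + Suc (k1 + k) = n0 + k1 + Suc k" by simp
  have "ech w n0 U (k1 + Suc k) = ech w n0 U (Suc (k1 + k))" by simp
  also have "\<dots> = (\<lambda>j. if j = w (n0 + k1 + Suc k)
      then ech w n0 U (k1 + k) (o1 (w (n0 + k1 + Suc k))) + ech w n0 U (k1 + k) (o2 (w (n0 + k1 + Suc k)))
      else ech w n0 U (k1 + k) j)" by (simp only: ech.simps e)
  also have "\<dots> = ech w (n0 + k1) (ech w n0 U k1) (Suc k)" by (simp only: ech.simps Suc.IH)
  finally show ?case .
qed

lemma conv_intervals:
  fixes f :: "nat \<Rightarrow> nat \<Rightarrow> real"
  assumes H: "\<forall>\<epsilon>>0. \<exists>N \<alpha>. \<forall>n\<ge>N. \<forall>j\<in>J. \<alpha> \<le> f n j \<and> f n j \<le> \<alpha> + \<epsilon>" and j0: "j0 \<in> J"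
  shows "\<exists>q. \<forall>j\<in>J. ((\<lambda>n. f n j) \<longlongrightarrow> q) sequentially"
proof -
  have "Cauchy (\<lambda>n. f n j0)"
    unfolding Cauchy_def
  proof (intro allI impI)
    fix e :: real assume e: "e > 0"
    obtain N \<alpha> where N: "\<forall>n\<ge>N. \<forall>j\<in>J. \<alpha> \<le> f n j \<and> f n j \<le> \<alpha> + e/2" using H e by (meson half_gt_zero)
    have "\<forall>m\<ge>N. \<forall>n\<ge>N. dist (f m j0) (f n j0) < e"
    proof (intro allI impI)
      fix m n assume "m \<ge> N" "n \<ge> N"
      then have "\<alpha> \<le> f m j0" "f m j0 \<le> \<alpha> + e/2" "\<alpha> \<le> f n j0" "f n j0 \<le> \<alpha> + e/2" using N j0 by blast+
      then show "dist (f m j0) (f n j0) < e" using e by (simp add: dist_real_def abs_if)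
    qed
    then show "\<exists>M. \<forall>m\<ge>M. \<forall>n\<ge>M. dist (f m j0) (f n j0) < e" by blast
  qed
  then obtain q where q: "(\<lambda>n. f n j0) \<longlonglongrightarrow> q"
    using Cauchy_convergent_iff convergent_def by blast
  have "((\<lambda>n. f n j) \<longlongrightarrow> q) sequentially" if j: "j \<in> J" for j
  proof -
    have "(\<lambda>n. f n j - f n j0) \<longlonglongrightarrow> 0"
      unfolding LIMSEQ_def
    proof (intro allI impI)
      fix r :: real assume r: "r > 0"
      obtain N \<alpha> where N: "\<forall>n\<ge>N. \<forall>j\<in>J. \<alpha> \<le> f n j \<and> f n j \<le> \<alpha> + r/2" using H r by (meson half_gt_zero)
      have "\<forall>n\<ge>N. dist (f n j - f n j0) 0 < r"
      proof (intro allI impI)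
        fix n assume "n \<ge> N"
        then have "\<alpha> \<le> f n j" "f n j \<le> \<alpha> + r/2" "\<alpha> \<le> f n j0" "f n j0 \<le> \<alpha> + r/2" using N j0 j by blast+
        then show "dist (f n j - f n j0) 0 < r" using r by (simp add: dist_real_def abs_if)
      qed
      then show "\<exists>no. \<forall>n\<ge>no. dist (f n j - f n j0) 0 < r" by blast
    qed
    from tendsto_add[OF this q] show ?thesis by simp
  qed
  then show ?thesis by blast
qed

lemma case1:
  assumes rw: "reduced_inf_seq w" and apos: "a > 0" and bpos: "b > 0" and cpos: "c > 0"
    and inf: "\<forall>i\<in>{1,2,3}. \<forall>m. \<exists>n>m. w n = i"
  shows "\<exists>q. \<forall>j\<in>{1,2,3}. ((\<lambda>n. ln (Mk l1 l2 l3 w n j) / E w (a,b,c) n j) \<longlongrightarrow> q) sequentially"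
proof -
  have W: "\<forall>n\<ge>1. w n \<in> {1,2,3}" using rw by (auto simp: reduced_inf_seq_def)
  define e where "e = E w (a,b,c)"
  define M where "M = Mk l1 l2 l3 w"
  define p where "p = (\<lambda>n j. ln (M n j))"
  define K where "K = 3 + real l1 + real l2 + real l3"
  define ka where "ka = ln K"
  have ka0: "ka \<ge> 0" unfolding ka_def K_def by simp
  have e0pos: "\<forall>j\<in>{1,2,3}. e 0 j > 0" using apos bpos cpos by (auto simp: e_def E_def)
  have e_ech: "e (n0 + k) j = ech w n0 (e n0) k j" if "j \<in> {1,2,3}" for n0 k j
    using ech_E[OF W that] unfolding e_def by simp
  have epos: "e n j > 0" if "j \<in> {1,2,3}" for n j
    using e_ech[of j 0 n] ech_pos[OF W e0pos that] that by simp
  have Me: "\<forall>j\<in>{1,2,3}. M n j \<ge> 1" for n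
    using Minv_all[OF rw] unfolding Minv_def M_def by blast
  have Mpos: "M n j > 0" if "j \<in> {1,2,3}" for n j using Me[of n] that by fastforce
  have egrow: "\<exists>N. \<forall>n\<ge>N. mn (e n) \<ge> B" for B
  proof (rule growth[where X=e, OF W e0pos _ _ inf])
    fix n
    have m: "w (Suc n) \<in> {1,2,3}" using W by simp
    show "e (Suc n) (w (Suc n)) \<ge> e n (o1 (w (Suc n))) + e n (o2 (w (Suc n)))"
      using E_Suc[OF W m, of "(a,b,c)" n] unfolding e_def by simp
  next
    fix n j assume "j \<in> {1,2,3}" "j \<noteq> w (Suc n)"
    then show "e (Suc n) j = e n j" using E_Suc[OF W, of j "(a,b,c)" n] unfolding e_def by simp
  qed
  have M0pos: "\<forall>j\<in>{1,2,3}. M 0 j > 0" by (simp add: M_def Mk_def)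
  have Mgrow: "\<exists>N. \<forall>n\<ge>N. mn (M n) \<ge> B" for B
  proof (rule growth[where X=M, OF W M0pos _ _ inf])
    fix n
    show "M (Suc n) (w (Suc n)) \<ge> M n (o1 (w (Suc n))) + M n (o2 (w (Suc n)))"
      using Mstep(2)[OF rw Minv_all[OF rw]] unfolding M_def by simp
  next
    fix n j assume "j \<in> {1,2,3}" "j \<noteq> w (Suc n)"
    then show "M (Suc n) j = M n j" using Mstep(5)[OF rw Minv_all[OF rw]] unfolding M_def by simp
  qed
  have p_lo: "p (Suc n) (w (Suc n)) \<ge> p n (o1 (w (Suc n))) + p n (o2 (w (Suc n)))" for n
  proof -
    have m: "w (Suc n) \<in> {1,2,3}" using W by simp
    have y: "M n (o1 (w (Suc n))) > 0" and z: "M n (o2 (w (Suc n))) > 0" using Mpos o_facts[OF m] by auto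
    have "M (Suc n) (w (Suc n)) \<ge> M n (o1 (w (Suc n))) * M n (o2 (w (Suc n)))"
      using Mstep(3)[OF rw Minv_all[OF rw]] unfolding M_def by simp
    then have "ln (M (Suc n) (w (Suc n))) \<ge> ln (M n (o1 (w (Suc n))) * M n (o2 (w (Suc n))))"
      using y z by (intro ln_mono) auto
    then show ?thesis using y z unfolding p_def by (simp add: ln_mult)
  qed
  have p_hi: "p (Suc n) (w (Suc n)) \<le> p n (o1 (w (Suc n))) + p n (o2 (w (Suc n))) + ka" for n
  proof -
    have m: "w (Suc n) \<in> {1,2,3}" using W by simp
    have y: "M n (o1 (w (Suc n))) > 0" and z: "M n (o2 (w (Suc n))) > 0" using Mpos o_facts[OF m] by auto
    have x: "M (Suc n) (w (Suc n)) > 0" using Mpos m by simp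
    have "M (Suc n) (w (Suc n)) \<le> K * M n (o1 (w (Suc n))) * M n (o2 (w (Suc n)))"
      using Mstep(4)[OF rw Minv_all[OF rw]] unfolding M_def K_def by simp
    then have "ln (M (Suc n) (w (Suc n))) \<le> ln (K * M n (o1 (w (Suc n))) * M n (o2 (w (Suc n))))"
      using x by (intro ln_mono) auto
    moreover have "ln (K * M n (o1 (w (Suc n))) * M n (o2 (w (Suc n)))) = ln K + ln (M n (o1 (w (Suc n)))) + ln (M n (o2 (w (Suc n))))"
      using y z by (simp add: ln_mult K_def)
    ultimately show ?thesis unfolding p_def ka_def by linarith
  qed
  have p_un: "p (Suc n) j = p n j" if "j \<in> {1,2,3}" "j \<noteq> w (Suc n)" for n j
    using Mstep(5)[OF rw Minv_all[OF rw] that] unfolding p_def M_def by simp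
  have p_lower: "p (n0 + k) j \<ge> ech w n0 (p n0) k j" if "j \<in> {1,2,3}" for n0 k j
    using ech_super[OF W, of "\<lambda>k. p (n0 + k)" n0, OF _ _ that] p_lo p_un by simp
  have p_upper: "p (n0 + k) j + ka \<le> ech w n0 (p n0) k j + ka * ech w n0 (\<lambda>_. 1) k j" if "j \<in> {1,2,3}" for n0 k j
    using ech_sub[OF W, of "\<lambda>k. p (n0 + k)" n0 ka, OF _ _ that] p_hi p_un by simp
  have p_nn: "p n j \<ge> 0" if "j \<in> {1,2,3}" for n j using Me[of n] that unfolding p_def by auto
  define B where "B = max (1/a) (max (1/b) (1/c))"
  have fB: "p n j / e n j \<le> ka * B" if j: "j \<in> {1,2,3}" for n j
  proof -
    have p0: "p 0 = (\<lambda>_. 0)" by (simp add: p_def M_def Mk_def fun_eq_iff comp3_def)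
    have "ech w 0 (p 0) n j \<le> 0 * ech w 0 (\<lambda>_. 1) n j + 0 * ech w 0 (\<lambda>_. 1) n j"
      by (rule ech_lin[OF W _ j]) (simp add: p0)
    then have "p n j \<le> ka * ech w 0 (\<lambda>_. 1) n j" using p_upper[OF j, of 0 n] ka0 by simp
    moreover have "ech w 0 (\<lambda>_. 1) n j / ech w 0 (e 0) n j \<le> B"
    proof -
      have "\<forall>j\<in>{1,2,3}. 0 \<le> 1 / e 0 j \<and> 1 / e 0 j \<le> B"
        using apos bpos cpos by (auto simp: e_def E_def B_def)
      from ech_mediant[OF W e0pos, of 0 "\<lambda>_. 1" B, OF _ j] this show ?thesis by simp
    qed
    moreover have en: "e n j = ech w 0 (e 0) n j" using e_ech[OF j, of 0 n] by simp
    moreover have ep: "e n j > 0" using epos[OF j] .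
    ultimately have h1: "p n j \<le> ka * ech w 0 (\<lambda>_. 1) n j" and h2: "ech w 0 (\<lambda>_. 1) n j \<le> B * e n j"
      by (simp_all add: divide_simps)
    have "ka * ech w 0 (\<lambda>_. 1) n j \<le> ka * (B * e n j)" using h2 ka0 by (rule mult_left_mono)
    then have "p n j \<le> (ka * B) * e n j" using h1 by (simp add: mult.assoc)
    then show ?thesis using ep by (simp add: divide_simps)
  qed
  have H: "\<forall>\<epsilon>>0. \<exists>N \<alpha>. \<forall>n\<ge>N. \<forall>j\<in>{1,2,3}. \<alpha> \<le> p n j / e n j \<and> p n j / e n j \<le> \<alpha> + \<epsilon>"
  proof (intro allI impI)
    fix \<epsilon> :: real assume \<epsilon>: "\<epsilon> > 0"
    define \<delta> where "\<delta> = \<epsilon> / 3"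
    have \<delta>: "\<delta> > 0" using \<epsilon> \<delta>_def by simp
    define T where "T = max 1 (ka * ka * B / \<delta>)"
    obtain n0 where n0: "mn (M n0) \<ge> exp T" using Mgrow[of "exp T"] by blast
    define U where "U = p n0"
    define m where "m = mn U"
    have UT: "U j \<ge> T" if "j \<in> {1,2,3}" for j
    proof -
      have "M n0 j \<ge> exp T" using n0 mn_le[OF that] by (meson order_trans)
      moreover have "M n0 j > 0" using Mpos[OF that] .
      ultimately have "ln (exp T) \<le> ln (M n0 j)" by (subst ln_le_cancel_iff) auto
      then show ?thesis unfolding U_def p_def by simp
    qed
    have mT: "m \<ge> T" unfolding m_def by (rule mn_ge) (use UT in auto)
    have m1: "m \<ge> 1" using mT T_def by simp
    have kk: "ka * ka * B / m \<le> \<delta>"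
    proof -
      have "ka * ka * B / \<delta> \<le> m" using mT T_def by simp
      then show ?thesis using m1 \<delta> by (simp add: divide_simps mult.commute)
    qed
    define V where "V = e n0"
    have Vpos: "\<forall>j\<in>{1,2,3}. V j > 0" using epos V_def by simp
    define D where "D = dd U V"
    obtain N1 where N1: "\<forall>n\<ge>N1. mn (e n) \<ge> max 1 (D / \<delta>)" using egrow by blast
    define k1 where "k1 = N1"
    define Lo where "Lo = ech w n0 U"
    define Ek where "Ek = ech w n0 V"
    have Ek_e: "Ek k j = e (n0 + k) j" if "j \<in> {1,2,3}" for k j using e_ech[OF that] Ek_def V_def by simp
    have Ekpos: "Ek k j > 0" if "j \<in> {1,2,3}" for k j using Ek_e[OF that] epos[OF that] by simp
    define c0 where "c0 = Lo k1 1 / Ek k1 1"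
    have close: "\<bar>Lo k1 j / Ek k1 j - c0\<bar> \<le> \<delta>" if j: "j \<in> {1,2,3}" for j
    proof -
      have big: "mn (e (n0 + k1)) \<ge> max 1 (D / \<delta>)" using N1 k1_def by simp
      have Ej: "Ek k1 j \<ge> max 1 (D / \<delta>)" using big mn_le[OF j, of "e (n0+k1)"] Ek_e[OF j] by simp
      have E1: "Ek k1 1 \<ge> max 1 (D / \<delta>)" using big mn_le[of 1 "e (n0+k1)"] Ek_e[of 1] by simp
      have "\<bar>Lo k1 j / Ek k1 j - c0\<bar> \<le> dd (Lo k1) (Ek k1) / (Ek k1 j * Ek k1 1)"
        unfolding c0_def by (rule ratio_diff) (use Ekpos j in auto)
      also have "\<dots> \<le> D / (Ek k1 j * Ek k1 1)"
        using ech_dd[OF W, of n0 U k1 V] Ekpos[OF j, of k1] Ekpos[of 1 k1] unfolding D_def Lo_def Ek_def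
        by (intro divide_right_mono) (simp_all add: zero_le_mult_iff)
      also have "\<dots> \<le> \<delta>"
      proof -
        have D0: "D \<ge> 0" unfolding D_def dd_def by simp
        have "Ek k1 j * Ek k1 1 \<ge> 1 * (D / \<delta>)" using Ej E1 D0 \<delta>
          by (intro mult_mono) auto
        then have "D \<le> \<delta> * (Ek k1 j * Ek k1 1)" using \<delta> by (simp add: divide_simps mult.commute)
        then show ?thesis using Ekpos[OF j] Ekpos[of 1] by (simp add: divide_simps mult.commute)
      qed
      finally show ?thesis .
    qed
    have band: "c0 - \<delta> \<le> Lo k j / Ek k j \<and> Lo k j / Ek k j \<le> c0 + \<delta>" if "k \<ge> k1" "j \<in> {1,2,3}" for k j
    proof -
      obtain d where d: "k = k1 + d" using \<open>k \<ge> k1\<close> le_Suc_ex by blast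
      have pos1: "\<forall>j\<in>{1,2,3}. Ek k1 j > 0" using Ekpos by simp
      have b1: "\<forall>j\<in>{1,2,3}. c0 - \<delta> \<le> Lo k1 j / Ek k1 j \<and> Lo k1 j / Ek k1 j \<le> c0 + \<delta>"
      proof
        fix i :: nat assume "i \<in> {1,2,3}"
        from close[OF this] show "c0 - \<delta> \<le> Lo k1 i / Ek k1 i \<and> Lo k1 i / Ek k1 i \<le> c0 + \<delta>" by (simp add: abs_le_iff)
      qed
      show ?thesis using ech_mediant[OF W pos1 b1 that(2), of "n0 + k1" d]
        unfolding d Lo_def Ek_def ech_shift by simp
    qed
    have "\<forall>n\<ge>n0 + k1. \<forall>j\<in>{1,2,3}. c0 - \<delta> \<le> p n j / e n j \<and> p n j / e n j \<le> (c0 - \<delta>) + \<epsilon>"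
    proof (intro allI impI ballI)
      fix n j assume n: "n \<ge> n0 + k1" and j: "(j::nat) \<in> {1,2,3}"
      define k where "k = n - n0"
      have k: "n = n0 + k" "k \<ge> k1" using n unfolding k_def by auto
      have en: "e n j = Ek k j" using Ek_e[OF j] k by simp
      have enp: "e n j > 0" using epos[OF j] .
      have lo: "p n j \<ge> Lo k j" using p_lower[OF j, of n0 k] k unfolding Lo_def U_def by simp
      have hi: "p n j \<le> Lo k j + ka * ech w n0 (\<lambda>_. 1) k j" using p_upper[OF j, of n0 k] k ka0 unfolding Lo_def U_def by simp
      have one: "ech w n0 (\<lambda>_. 1) k j \<le> (1/m) * Lo k j + 0 * Lo k j"
        unfolding Lo_def
      proof (rule ech_lin[OF W _ j])
        show "\<forall>j\<in>{1,2,3}. 1 \<le> 1 / m * U j + 0 * U j"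
        proof
          fix i :: nat assume "i \<in> {1,2,3}"
          then have "U i \<ge> m" unfolding m_def by (rule mn_le)
          then show "1 \<le> 1 / m * U i + 0 * U i" using m1 by (simp add: divide_simps)
        qed
      qed
      have bd: "Lo k j / Ek k j \<le> c0 + \<delta>" "c0 - \<delta> \<le> Lo k j / Ek k j" using band[OF k(2) j] by auto
      have f_lo: "p n j / e n j \<ge> Lo k j / Ek k j" using lo en enp by (simp add: divide_right_mono)
      have fB': "p n j / e n j \<le> ka * B" using fB[OF j] .
      have "p n j / e n j \<le> Lo k j / Ek k j + ka * (Lo k j / Ek k j) / m"
      proof -
        have "p n j \<le> Lo k j + ka * ((1/m) * Lo k j)"
          using hi one ka0 by (smt (verit) mult_left_mono)
        then have "p n j / e n j \<le> (Lo k j + ka * ((1/m) * Lo k j)) / Ek k j"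
          using en enp by (simp add: divide_right_mono)
        moreover have "(Lo k j + ka * ((1/m) * Lo k j)) / Ek k j = Lo k j / Ek k j + ka * (Lo k j / Ek k j) / m"
          using m1 Ekpos[OF j, of k] by (simp add: field_simps)
        ultimately show ?thesis by simp
      qed
      also have "\<dots> \<le> Lo k j / Ek k j + ka * (ka * B) / m"
      proof -
        have "Lo k j / Ek k j \<le> ka * B" using f_lo fB' by linarith
        then have "ka * (Lo k j / Ek k j) \<le> ka * (ka * B)" using ka0 by (rule mult_left_mono)
        then have "ka * (Lo k j / Ek k j) / m \<le> ka * (ka * B) / m" by (rule divide_right_mono) (use m1 in simp)
        then show ?thesis by linarith
      qed
      also have "\<dots> \<le> c0 + \<delta> + \<delta>" using bd kk by simp
      finally have "p n j / e n j \<le> c0 + 2 * \<delta>" by simp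
      then show "c0 - \<delta> \<le> p n j / e n j \<and> p n j / e n j \<le> (c0 - \<delta>) + \<epsilon>"
        using f_lo bd \<delta>_def by simp
    qed
    then show "\<exists>N \<alpha>. \<forall>n\<ge>N. \<forall>j\<in>{1,2,3}. \<alpha> \<le> p n j / e n j \<and> p n j / e n j \<le> \<alpha> + \<epsilon>" by blast
  qed
  from conv_intervals[OF H, of 1] show ?thesis unfolding p_def M_def e_def by simp
qed



lemma cesaro0:
  fixes r :: "nat \<Rightarrow> real"
  assumes r: "r \<longlonglongrightarrow> 0"
  shows "(\<lambda>k. (\<Sum>i<k. r i) / real k) \<longlonglongrightarrow> 0"
  unfolding LIMSEQ_def
proof (intro allI impI)
  fix \<epsilon> :: real assume \<epsilon>: "\<epsilon> > 0"
  obtain K where K: "\<forall>i\<ge>K. dist (r i) 0 < \<epsilon>/2" using r \<epsilon> unfolding LIMSEQ_def by (meson half_gt_zero)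
  define C0 where "C0 = \<bar>\<Sum>i<K. r i\<bar>"
  define N where "N = K + nat \<lceil>2 * C0 / \<epsilon>\<rceil> + 1"
  have "dist ((\<Sum>i<k. r i) / real k) 0 < \<epsilon>" if k: "k \<ge> N" for k
  proof -
    have kK: "K \<le> k" using k N_def by simp
    have kpos: "real k > 0" using k N_def by simp
    have split: "(\<Sum>i<k. r i) = (\<Sum>i<K. r i) + (\<Sum>i\<in>{K..<k}. r i)"
      using sum.atLeastLessThan_concat[of 0 K k r] kK by (simp add: atLeast0LessThan)
    have "\<bar>\<Sum>i\<in>{K..<k}. r i\<bar> \<le> (\<Sum>i\<in>{K..<k}. \<bar>r i\<bar>)" by (rule sum_abs)
    also have "\<dots> \<le> real (card {K..<k}) * (\<epsilon>/2)"
      using K by (intro sum_bounded_above) (auto simp: dist_real_def less_imp_le)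
    also have "\<dots> \<le> real k * (\<epsilon>/2)" using \<epsilon> by (intro mult_right_mono) auto
    finally have t: "\<bar>\<Sum>i\<in>{K..<k}. r i\<bar> \<le> real k * (\<epsilon>/2)" .
    have c: "C0 < real k * (\<epsilon>/2)"
    proof -
      have "2 * C0 / \<epsilon> < real k" using k N_def by linarith
      then show ?thesis using \<epsilon> by (simp add: field_simps)
    qed
    have "\<bar>\<Sum>i<k. r i\<bar> < real k * \<epsilon>" using split t c C0_def by linarith
    then show ?thesis using kpos by (simp add: dist_real_def abs_divide field_simps)
  qed
  then show "\<exists>no. \<forall>k\<ge>no. dist ((\<Sum>i<k. r i) / real k) 0 < \<epsilon>" by blast
qed

lemma stolz:
  fixes A V \<sigma> :: "nat \<Rightarrow> real"
  assumes s: "\<sigma> \<longlonglongrightarrow> S" and A: "\<And>k. A (Suc k) = A k + \<sigma> k"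
    and V: "\<And>k. V (Suc k) = V k + Z" and Z: "Z > 0"
  shows "(\<lambda>k. A k / V k) \<longlonglongrightarrow> S / Z"
proof -
  have As: "A k = A 0 + (\<Sum>i<k. \<sigma> i - S) + real k * S" for k
    by (induction k) (simp_all add: A algebra_simps)
  have Vs: "V k = V 0 + real k * Z" for k
    by (induction k) (simp_all add: V algebra_simps)
  have r: "(\<lambda>i. \<sigma> i - S) \<longlonglongrightarrow> 0" using tendsto_diff[OF s tendsto_const[of S]] by simp
  have num: "(\<lambda>k. A 0 / real k + (\<Sum>i<k. \<sigma> i - S) / real k + S) \<longlonglongrightarrow> 0 + 0 + S"
    by (intro tendsto_add lim_const_over_n cesaro0[OF r] tendsto_const)
  have den: "(\<lambda>k. V 0 / real k + Z) \<longlonglongrightarrow> 0 + Z"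
    by (intro tendsto_add lim_const_over_n tendsto_const)
  have lim: "(\<lambda>k. (A 0 / real k + (\<Sum>i<k. \<sigma> i - S) / real k + S) / (V 0 / real k + Z)) \<longlonglongrightarrow> (0 + 0 + S) / (0 + Z)"
    using Z by (intro tendsto_divide num den) auto
  have ev: "eventually (\<lambda>k. (A 0 / real k + (\<Sum>i<k. \<sigma> i - S) / real k + S) / (V 0 / real k + Z) = A k / V k) sequentially"
    using eventually_gt_at_top[of 0]
  proof eventually_elim
    case (elim k)
    then have kp: "real k > 0" by simp
    have "(A 0 / real k + (\<Sum>i<k. \<sigma> i - S) / real k + S) = A k / real k"
      using kp As[of k] by (simp add: field_simps)
    moreover have "V 0 / real k + Z = V k / real k" using kp Vs[of k] by (simp add: field_simps)
    ultimately show ?case using kp by simp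
  qed
  show ?thesis using tendsto_cong[OF ev] lim by simp
qed



lemma case2:
  assumes rw: "reduced_inf_seq w" and apos: "a > 0" and bpos: "b > 0" and cpos: "c > 0"
    and i: "i \<in> {1,2,3}" and fin: "finite {n. n \<ge> 1 \<and> w n = i}"
  shows "\<exists>q. \<forall>j\<in>{1,2,3} - {i}. ((\<lambda>n. ln (Mk l1 l2 l3 w n j) / E w (a,b,c) n j) \<longlongrightarrow> q) sequentially"
proof -
  have W: "\<forall>n\<ge>1. w n \<in> {1,2,3}" and R: "\<forall>n\<ge>1. w (Suc n) \<noteq> w n"
    using rw by (auto simp: reduced_inf_seq_def)
  obtain m0 where m0: "\<forall>n\<in>{n. n \<ge> 1 \<and> w n = i}. n \<le> m0" using fin finite_nat_set_iff_bounded_le by blast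
  define N0 where "N0 = m0 + 1"
  have N01: "N0 \<ge> 1" unfolding N0_def by simp
  have wi: "w n \<noteq> i" if "n \<ge> N0" for n
  proof
    assume "w n = i"
    then have "n \<le> m0" using m0 that N01 by auto
    then show False using that N0_def by simp
  qed
  have Wn: "w n \<in> {1,2,3}" if "n \<ge> N0" for n using W that N01 by simp
  have Rn: "w (Suc n) \<noteq> w n" if "n \<ge> N0" for n using R that N01 by simp
  define e where "e = E w (a,b,c)"
  define M where "M = Mk l1 l2 l3 w"
  have e0pos: "\<forall>j\<in>{1,2,3}. e 0 j > 0" using apos bpos cpos by (auto simp: e_def E_def)
  have epos: "e n j > 0" if "j \<in> {1,2,3}" for n j
    using ech_E[OF W that, of "(a,b,c)" 0 n] ech_pos[OF W e0pos that] unfolding e_def by simp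
  have Me: "\<forall>j\<in>{1,2,3}. M n j \<ge> 1" for n
    using Minv_all[OF rw] unfolding Minv_def M_def by blast
  have Me1: "M n j \<ge> 1" if "j \<in> {1,2,3}" for n j using Me[of n] that by blast
  note MS = Mstep[OF rw Minv_all[OF rw, of l1 l2 l3]]
  have Munch: "M (Suc n) j = M n j" if "j \<in> {1,2,3}" "j \<noteq> w (Suc n)" for n j
    using MS(5)[OF that] unfolding M_def by simp
  have eunch: "e (Suc n) j = e n j" if "j \<in> {1,2,3}" "j \<noteq> w (Suc n)" for n j
    using E_Suc[OF W that(1)] that(2) unfolding e_def by simp
  define C where "C = M N0 i"
  define Z where "Z = e N0 i"
  have Mi: "M n i = C" if "n \<ge> N0" for n
    using that
  proof (induction n rule: dec_induct)
    case base then show ?case by (simp add: C_def)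
  next
    case (step n)
    have "i \<noteq> w (Suc n)" using wi[of "Suc n"] step by auto
    then show ?case using Munch[OF i] step by simp
  qed
  have ei: "e n i = Z" if "n \<ge> N0" for n
    using that
  proof (induction n rule: dec_induct)
    case base then show ?case by (simp add: Z_def)
  next
    case (step n)
    have "i \<noteq> w (Suc n)" using wi[of "Suc n"] step by auto
    then show ?case using eunch[OF i] step by simp
  qed
  have oth: "(o1 (w (Suc n)) = w n \<and> o2 (w (Suc n)) = i) \<or> (o1 (w (Suc n)) = i \<and> o2 (w (Suc n)) = w n)"
    if "n \<ge> N0" for n
    using o_third[OF Wn[of "Suc n"] Wn[of n] i] Rn[of n] wi[of n] wi[of "Suc n"] that by auto
  define u where "u n = M n (w n)" for n
  define v where "v n = e n (w n)" for n
  have C1: "C \<ge> 1" using Me1[OF i] C_def by simp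
  have Z0: "Z > 0" using epos[OF i] Z_def by simp
  have u1: "u n \<ge> 1" if "n \<ge> N0" for n using Me1[OF Wn[OF that]] u_def by simp
  have vstep: "v (Suc n) = v n + Z" if n: "n \<ge> N0" for n
  proof -
    have "e (Suc n) (w (Suc n)) = e n (o1 (w (Suc n))) + e n (o2 (w (Suc n)))"
      using E_Suc[OF W Wn[of "Suc n"], of "(a,b,c)" n] n unfolding e_def by simp
    then show ?thesis using oth[OF n] ei[OF n] unfolding v_def by auto
  qed
  have uge: "u (Suc n) \<ge> u n + C" if n: "n \<ge> N0" for n
  proof -
    have "M (Suc n) (w (Suc n)) \<ge> M n (o1 (w (Suc n))) + M n (o2 (w (Suc n)))"
      using MS(2)[of n] unfolding M_def by simp
    then show ?thesis using oth[OF n] Mi[OF n] unfolding u_def by auto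
  qed
  have unch: "M (Suc n) (w n) = u n" if n: "n \<ge> N0" for n
    using Munch[OF Wn[OF n] Rn[OF n, symmetric]] unfolding u_def by simp
  have w2: "w (Suc (Suc n)) = w n" if n: "n \<ge> N0" for n
  proof -
    have "w (Suc (Suc n)) \<in> {1,2,3}" "w (Suc n) \<in> {1,2,3}" "w n \<in> {1,2,3}"
      using Wn n by auto
    moreover have "w (Suc (Suc n)) \<noteq> w (Suc n)" "w (Suc n) \<noteq> w n" using Rn n by auto
    moreover have "w (Suc (Suc n)) \<noteq> i" "w (Suc n) \<noteq> i" "w n \<noteq> i" using wi n by auto
    ultimately show ?thesis using i by auto
  qed
  define Lm where "Lm = real l1 + real l2 + real l3"
  have urec: "\<exists>lam. 0 \<le> lam \<and> lam \<le> Lm \<and> u (Suc (Suc n)) = (u (Suc n)^2 + lam * u (Suc n) * C + C^2) / u n"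
    if n: "n \<ge> N0" for n
  proof -
    have n1: "Suc n \<ge> N0" using n by simp
    define k where "k = w (Suc (Suc n))"
    have k: "k \<in> {1,2,3}" using Wn n k_def by simp
    have "M (Suc (Suc n)) k = ((M (Suc n) (o1 k))^2 + Lc l1 l2 l3 k * M (Suc n) (o1 k) * M (Suc n) (o2 k)
        + (M (Suc n) (o2 k))^2) / M (Suc n) k"
      using Mk_Suc[of w "Suc n" k l1 l2 l3] k unfolding M_def k_def by simp
    moreover have "M (Suc n) k = u n" using unch[OF n] w2[OF n] k_def by simp
    moreover have "M (Suc n) (w (Suc n)) = u (Suc n)" by (simp add: u_def)
    moreover have "M (Suc n) i = C" using Mi[OF n1] .
    moreover note oth[OF n1]
    ultimately have "u (Suc (Suc n)) = (u (Suc n)^2 + Lc l1 l2 l3 k * u (Suc n) * C + C^2) / u n"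
      unfolding u_def k_def by (auto simp: algebra_simps)
    moreover have "0 \<le> Lc l1 l2 l3 k" "Lc l1 l2 l3 k \<le> Lm" by (auto simp: Lc_def Lm_def)
    ultimately show ?thesis by blast
  qed
  define t where "t n = u (Suc n) / u n" for n
  define Dc where "Dc = Lm * C + C^2"
  have Dc0: "Dc \<ge> 0" using C1 by (simp add: Dc_def Lm_def)
  have tmono: "t n \<le> t (Suc n)" and tinc: "t (Suc n) \<le> t n + Dc / u n" if n: "n \<ge> N0" for n
  proof -
    obtain lam where lam: "0 \<le> lam" "lam \<le> Lm" "u (Suc (Suc n)) = (u (Suc n)^2 + lam * u (Suc n) * C + C^2) / u n"
      using urec[OF n] by blast
    have un: "u n \<ge> 1" and un1: "u (Suc n) \<ge> 1" using u1 n by auto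
    have ts: "t (Suc n) = t n + lam * C / u n + C^2 / (u n * u (Suc n))"
      unfolding t_def using lam(3) un un1 by (simp add: field_simps power2_eq_square)
    have p1: "lam * C / u n \<ge> 0" using lam C1 un by simp
    have p2: "C^2 / (u n * u (Suc n)) \<ge> 0" using un un1 by simp
    show "t n \<le> t (Suc n)" using ts p1 p2 by linarith
    have q1: "lam * C / u n \<le> Lm * C / u n" using lam C1 un by (simp add: divide_right_mono mult_right_mono)
    have q2: "C^2 / (u n * u (Suc n)) \<le> C^2 / u n"
    proof -
      have "u n * 1 \<le> u n * u (Suc n)" using un un1 by (intro mult_left_mono) auto
      then show ?thesis using un by (intro divide_left_mono) auto
    qed
    show "t (Suc n) \<le> t n + Dc / u n" using ts q1 q2 unfolding Dc_def by (simp add: add_divide_distrib)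
  qed
  define \<rho> where "\<rho> = t N0"
  have \<rho>1: "\<rho> > 1"
  proof -
    have "u (Suc N0) > u N0" using uge[of N0] C1 by simp
    then show ?thesis using u1[of N0] unfolding \<rho>_def t_def by simp
  qed
  have t\<rho>: "t n \<ge> \<rho>" if "n \<ge> N0" for n
    using that
  proof (induction n rule: dec_induct)
    case base then show ?case by (simp add: \<rho>_def)
  next
    case (step n) then show ?case using tmono[of n] by simp
  qed
  have ug: "u (Suc n) \<ge> \<rho> * u n" if n: "n \<ge> N0" for n
    using t\<rho>[OF n] u1[OF n] unfolding t_def by (simp add: field_simps)
  define cc where "cc = Dc * \<rho> / (\<rho> - 1)"
  define \<Phi> where "\<Phi> n = t n + cc / u n" for n
  have cc0: "cc \<ge> 0" using Dc0 \<rho>1 unfolding cc_def by simp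
  have \<Phi>dec: "\<Phi> (Suc n) \<le> \<Phi> n" if n: "n \<ge> N0" for n
  proof -
    have un: "u n \<ge> 1" using u1 n by auto
    have a1: "cc / u (Suc n) \<le> cc / (\<rho> * u n)"
    proof -
      have h: "\<rho> * u n > 0" using un \<rho>1 by simp
      then have "u (Suc n) > 0" using ug[OF n] by linarith
      then show ?thesis using ug[OF n] cc0 h by (intro divide_left_mono) auto
    qed
    have a2: "Dc / u n + cc / (\<rho> * u n) = cc / u n"
      using un \<rho>1 unfolding cc_def by (simp add: field_simps)
    show ?thesis using tinc[OF n] a1 a2 unfolding \<Phi>_def by linarith
  qed
  have \<Phi>le: "\<Phi> n \<le> \<Phi> N0" if "n \<ge> N0" for n
    using that
  proof (induction n rule: dec_induct)
    case base then show ?case by simp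
  next
    case (step n) then show ?case using \<Phi>dec[of n] by simp
  qed
  have tbound: "t n \<le> \<Phi> N0" if n: "n \<ge> N0" for n
  proof -
    have "cc / u n \<ge> 0" using cc0 u1[OF n] by simp
    then show ?thesis using \<Phi>le[OF n] unfolding \<Phi>_def by linarith
  qed
  define s where "s k = t (N0 + k)" for k
  have "incseq s" unfolding s_def by (intro incseq_SucI) (simp add: tmono)
  moreover have "\<forall>k. s k \<le> \<Phi> N0" unfolding s_def using tbound by simp
  ultimately obtain T where T: "s \<longlonglongrightarrow> T" "\<forall>k. s k \<le> T" by (rule incseq_convergent)
  have Tpos: "T > 0" using T(2)[rule_format, of 0] \<rho>1 unfolding s_def \<rho>_def by simp
  have lnT: "(\<lambda>k. ln (s k)) \<longlonglongrightarrow> ln T" using tendsto_ln[OF T(1)] Tpos by simp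
  define g where "g k = ln (u (N0 + k)) / v (N0 + k)" for k
  have g: "g \<longlonglongrightarrow> ln T / Z"
    unfolding g_def
  proof (rule stolz[OF lnT _ _ Z0])
    fix k
    have uk: "u (N0 + k) \<ge> 1" using u1 by simp
    have "u (N0 + Suc k) = s k * u (N0 + k)" unfolding s_def t_def using uk by simp
    moreover have "s k > 0" using \<open>\<forall>k. s k \<le> T\<close> t\<rho>[of "N0 + k"] \<rho>1 unfolding s_def by simp
    ultimately show "ln (u (N0 + Suc k)) = ln (u (N0 + k)) + ln (s k)" using uk by (simp add: ln_mult)
    show "v (N0 + Suc k) = v (N0 + k) + Z" using vstep[of "N0 + k"] by simp
  qed
  have "((\<lambda>n. ln (M n j) / e n j) \<longlongrightarrow> ln T / Z) sequentially" if j: "j \<in> {1,2,3} - {i}" for j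
    unfolding LIMSEQ_def
  proof (intro allI impI)
    fix r :: real assume r: "r > 0"
    obtain K where K: "\<forall>k\<ge>K. dist (g k) (ln T / Z) < r" using g r unfolding LIMSEQ_def by blast
    have "dist (ln (M n j) / e n j) (ln T / Z) < r" if n: "n \<ge> N0 + K + 1" for n
    proof (cases "w n = j")
      case True
      have "ln (M n j) / e n j = g (n - N0)" unfolding g_def u_def v_def using True n by simp
      then show ?thesis using K n by simp
    next
      case False
      define n' where "n' = n - 1"
      have n': "n = Suc n'" "n' \<ge> N0" using n n'_def by auto
      have "w n' = j"
      proof -
        have "w n' \<in> {1,2,3}" "w n \<in> {1,2,3}" using Wn n' by auto
        moreover have "w n' \<noteq> i" "w n \<noteq> i" "w n \<noteq> w n'" using wi Rn n' by auto
        ultimately show ?thesis using j False i by auto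
      qed
      then have "M n j = u n'" "e n j = v n'"
        using unch[OF n'(2)] eunch[OF Wn[OF n'(2)] Rn[OF n'(2), symmetric]] n'(1)
        unfolding v_def by auto
      then have "ln (M n j) / e n j = g (n' - N0)" unfolding g_def using n' by simp
      then show ?thesis using K n n' by simp
    qed
    then show "\<exists>no. \<forall>n\<ge>no. dist (ln (M n j) / e n j) (ln T / Z) < r" by blast
  qed
  then show ?thesis unfolding M_def e_def by blast
qed


theorem theorem6p10:
  fixes l1 l2 l3 :: nat and a b c :: real and w :: "nat \<Rightarrow> nat"
  assumes "zero_initial (a, b, c)"
    and "reduced_inf_seq w"
  shows "((\<forall>i\<in>{1,2,3}. \<exists>\<^sub>\<infinity>n. w n = i) \<longrightarrow>
           (\<exists>q::real. \<forall>j\<in>{1,2,3}.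
              ((\<lambda>n. ln (comp3 j (chain (gmut l1 l2 l3) w (1,1,1) n)) / comp3 j (chain emut w (a,b,c) n))
                 \<longlongrightarrow> q) sequentially))
       \<and> (\<forall>i\<in>{1,2,3}. finite {n. n \<ge> 1 \<and> w n = i} \<longrightarrow>
           (\<exists>q::real. \<forall>j\<in>{1,2,3} - {i}.
              ((\<lambda>n. ln (comp3 j (chain (gmut l1 l2 l3) w (1,1,1) n)) / comp3 j (chain emut w (a,b,c) n))
                 \<longlongrightarrow> q) sequentially))"
proof -
  have pos: "a > 0" "b > 0" "c > 0" using assms(1) by (auto simp: zero_initial_def)
  have P1: "(\<forall>i\<in>{1,2,3}. \<exists>\<^sub>\<infinity>n. w n = i) \<longrightarrow>
           (\<exists>q::real. \<forall>j\<in>{1,2,3}.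
              ((\<lambda>n. ln (comp3 j (chain (gmut l1 l2 l3) w (1,1,1) n)) / comp3 j (chain emut w (a,b,c) n))
                 \<longlongrightarrow> q) sequentially)"
  proof
    assume "\<forall>i\<in>{1,2,3}. \<exists>\<^sub>\<infinity>n. w n = i"
    then have "\<forall>i\<in>{1,2,3}. \<forall>m. \<exists>n>m. w n = i" by (simp add: INFM_nat)
    from case1[OF assms(2) pos this, of l1 l2 l3] show "\<exists>q::real. \<forall>j\<in>{1,2,3}.
              ((\<lambda>n. ln (comp3 j (chain (gmut l1 l2 l3) w (1,1,1) n)) / comp3 j (chain emut w (a,b,c) n))
                 \<longlongrightarrow> q) sequentially"
      by (simp add: Mk_def E_def)
  qed
  have P2: "\<forall>i\<in>{1,2,3}. finite {n. n \<ge> 1 \<and> w n = i} \<longrightarrow>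
           (\<exists>q::real. \<forall>j\<in>{1,2,3} - {i}.
              ((\<lambda>n. ln (comp3 j (chain (gmut l1 l2 l3) w (1,1,1) n)) / comp3 j (chain emut w (a,b,c) n))
                 \<longlongrightarrow> q) sequentially)"
  proof (intro ballI impI)
    fix i :: nat assume i: "i \<in> {1,2,3}" and fin: "finite {n. n \<ge> 1 \<and> w n = i}"
    from case2[OF assms(2) pos i fin, of l1 l2 l3] show "\<exists>q::real. \<forall>j\<in>{1,2,3} - {i}.
              ((\<lambda>n. ln (comp3 j (chain (gmut l1 l2 l3) w (1,1,1) n)) / comp3 j (chain emut w (a,b,c) n))
                 \<longlongrightarrow> q) sequentially"
      by (simp add: Mk_def E_def)
  qed
  from P1 P2 show ?thesis by blast
qed

end
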